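(* Let $n,k,d$ be positive integers with $k\le d<n$, let $\alpha>0$, and for each integer $M\ge 0$ set $n_M=n+M$, $k_M=k+M$, $d_M=d+M$, $\gamma_{MSR}=\frac{d_M\alpha}{d_M-k_M+1}$ and $\gamma_{MBR}=\alpha$. Let $s\in[0,1]$ be fixed. Then $$ \lim_{M\to\infty}\frac{C^{\text{exact}}_{n_M,k_M,d_M}\big(\alpha,\,s\gamma_{MSR}+(1-s)\gamma_{MBR}\big)}{C_{k_M,d_M}\big(\alpha,\,s\gamma_{MSR}+(1-s)\gamma_{MBR}\big)}=1. $$
   Context: A distributed storage system (regenerating code) with parameters $(n,k,d)$, node size $\alpha$ and total repair bandwidth $\gamma$ stores a file on $n$ nodes, each node storing an amount $\alpha$ of information, such that the file can be reconstructed from the contents of any $k$ nodes, and any lost node can be repaired by contacting any $d$ of the remaining nodes, each of which transmits an amount $\beta=\gamma/d$ to the new node. The code has exact repair if the repaired node stores exactly the same content as the lost node, and functional repair if the repaired node need only preserve the reconstruction and repair properties. $C^{\text{exact}}_{n,k,d}(\alpha,\gamma)$ denotes the capacity (maximum storable file size) of exact-repair codes with these parameters. Amounts of information are treated as arbitrarily divisible, so capacities are positively homogeneous. $C_{k,d}(\alpha,\gamma)$ denotes the capacity of functional-repair codes, which equals $\sum_{j=0}^{k-1}\min\{\alpha,\frac{d-j}{d}\gamma\}$. *)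

theory Defs
  imports Complex_Main "HOL-Library.FuncSet"
begin

text \<open>An (n,k,d) exact-repair code storing the file set F (finite, nonempty; file size
  log2 |F| bits) on nodes 0..n-1. enc i f is the content of node i for file f.
  Each node stores at most a bits (at most 2 powr a distinct contents); reconstruction
  from any k nodes; exact repair of any node i from any d other nodes H, each helper j
  sending at most b bits (message h j computed from its own content, may depend on i and H).\<close>
definition exact_repair_code ::
  "nat \<Rightarrow> nat \<Rightarrow> nat \<Rightarrow> real \<Rightarrow> real \<Rightarrow> nat set \<Rightarrow> (nat \<Rightarrow> nat \<Rightarrow> nat) \<Rightarrow> bool" where
  "exact_repair_code n k d a b F enc \<longleftrightarrow>
     finite F \<and> F \<noteq> {} \<and>
     (\<forall>i<n. real (card (enc i ` F)) \<le> 2 powr a) \<and>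
     (\<forall>K. K \<subseteq> {..<n} \<and> card K = k \<longrightarrow> inj_on (\<lambda>f. restrict (\<lambda>i. enc i f) K) F) \<and>
     (\<forall>i<n. \<forall>H. H \<subseteq> {..<n} - {i} \<and> card H = d \<longrightarrow>
        (\<exists>(h :: nat \<Rightarrow> nat \<Rightarrow> nat) (g :: (nat \<Rightarrow> nat) \<Rightarrow> nat).
            (\<forall>j\<in>H. real (card (h j ` enc j ` F)) \<le> 2 powr b) \<and>
            (\<forall>f\<in>F. g (restrict (\<lambda>j. h j (enc j f)) H) = enc i f)))"

text \<open>Information is arbitrarily divisible: a code with scale
  t > 0 stores t*alpha per node, uses t*gamma/d per helper, and achieves normalized
  file size log2|F| / t; the capacity is the supremum of these.\<close>
definition C_exact :: "nat \<Rightarrow> nat \<Rightarrow> nat \<Rightarrow> real \<Rightarrow> real \<Rightarrow> real" where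
  "C_exact n k d \<alpha> \<gamma> = Sup {log 2 (real (card F)) / t | t F enc.
      t > 0 \<and> exact_repair_code n k d (t * \<alpha>) (t * \<gamma> / real d) F enc}"

definition C_func :: "nat \<Rightarrow> nat \<Rightarrow> real \<Rightarrow> real \<Rightarrow> real" where
  "C_func k d \<alpha> \<gamma> = (\<Sum>j<k. min \<alpha> ((real d - real j) / real d * \<gamma>))"

end

theory Submission imports Defs "HOL-Library.Countable_Set" "HOL-Real_Asymp.Real_Asymp" "HOL-Computational_Algebra.Polynomial" begin

definition gcode :: "nat \<Rightarrow> nat \<Rightarrow> nat \<Rightarrow> real \<Rightarrow> real \<Rightarrow> 'f set \<Rightarrow> (nat \<Rightarrow> 'f \<Rightarrow> 'v) \<Rightarrow> (nat \<Rightarrow> nat \<Rightarrow> 'v \<Rightarrow> 'm) \<Rightarrow> bool" where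
 "gcode N K D A B F \<phi> \<mu> \<longleftrightarrow> finite F \<and> F \<noteq> {} \<and>
   (\<forall>i<N. real (card (\<phi> i ` F)) \<le> A) \<and>
   (\<forall>K'. K' \<subseteq> {..<N} \<and> card K' = K \<longrightarrow> (\<forall>f1\<in>F. \<forall>f2\<in>F. (\<forall>i\<in>K'. \<phi> i f1 = \<phi> i f2) \<longrightarrow> f1 = f2)) \<and>
   (\<forall>i<N. \<forall>H. H \<subseteq> {..<N} - {i} \<and> card H = D \<longrightarrow>
      (\<forall>j\<in>H. real (card (\<mu> i j ` \<phi> j ` F)) \<le> B) \<and>
      (\<forall>f1\<in>F. \<forall>f2\<in>F. (\<forall>j\<in>H. \<mu> i j (\<phi> j f1) = \<mu> i j (\<phi> j f2)) \<longrightarrow> \<phi> i f1 = \<phi> i f2))"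

lemma gcode_transfer:
  assumes G: "gcode N K D (2 powr a) (2 powr b) F \<phi> \<mu>"
  shows "\<exists>F' enc. exact_repair_code N K D a b F' enc \<and> card F' = card F"
proof -
  have fin: "finite F" using G unfolding gcode_def by (elim conjE) assumption
  have ne: "F \<noteq> {}" using G unfolding gcode_def by (elim conjE) assumption
  have Gn: "\<forall>i<N. real (card (\<phi> i ` F)) \<le> 2 powr a" using G unfolding gcode_def by (elim conjE) assumption
  have Gk: "\<forall>K'. K' \<subseteq> {..<N} \<and> card K' = K \<longrightarrow> (\<forall>f1\<in>F. \<forall>f2\<in>F. (\<forall>i\<in>K'. \<phi> i f1 = \<phi> i f2) \<longrightarrow> f1 = f2)"
    using G unfolding gcode_def by (elim conjE) assumption
  have Gr: "\<forall>i<N. \<forall>H. H \<subseteq> {..<N} - {i} \<and> card H = D \<longrightarrow>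
      (\<forall>j\<in>H. real (card (\<mu> i j ` \<phi> j ` F)) \<le> 2 powr b) \<and>
      (\<forall>f1\<in>F. \<forall>f2\<in>F. (\<forall>j\<in>H. \<mu> i j (\<phi> j f1) = \<mu> i j (\<phi> j f2)) \<longrightarrow> \<phi> i f1 = \<phi> i f2)"
    using G unfolding gcode_def by (elim conjE) assumption
  have cF: "countable F" using fin by (rule countable_finite)
  define F' where "F' = to_nat_on F ` F"
  define fr where "fr = from_nat_into F"
  have frF: "fr x \<in> F" if "x \<in> F'" for x using that by (auto simp: F'_def fr_def cF)
  have frinj: "inj_on fr F'" by (rule inj_onI) (auto simp: F'_def fr_def cF)
  have frimg: "fr ` F' = F" by (auto simp: F'_def fr_def cF image_iff)
  have cV: "countable (\<phi> i ` F)" for i using fin by (simp add: countable_finite)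
  define enc where "enc i x = to_nat_on (\<phi> i ` F) (\<phi> i (fr x))" for i x
  have card_enc: "card (enc i ` F') = card (\<phi> i ` F)" for i
  proof -
    have "enc i ` F' = to_nat_on (\<phi> i ` F) ` (\<phi> i ` (fr ` F'))" by (auto simp: enc_def image_image)
    also have "card \<dots> = card (\<phi> i ` F)" using frimg card_image[OF inj_on_to_nat_on[OF cV]] by simp
    finally show ?thesis .
  qed
  have encinj: "enc i x = enc i y \<longleftrightarrow> \<phi> i (fr x) = \<phi> i (fr y)" if "x \<in> F'" "y \<in> F'" for i x y
    using that frF cV unfolding enc_def by (simp add: to_nat_on_inj)
  have "exact_repair_code N K D a b F' enc"
    unfolding exact_repair_code_def
  proof (intro conjI allI impI)
    show "finite F'" using fin by (simp add: F'_def)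
    show "F' \<noteq> {}" using ne by (simp add: F'_def)
    show "real (card (enc i ` F')) \<le> 2 powr a" if "i < N" for i
      using Gn that by (simp add: card_enc)
    show "inj_on (\<lambda>f. restrict (\<lambda>i. enc i f) K') F'" if "K' \<subseteq> {..<N} \<and> card K' = K" for K'
    proof (rule inj_onI)
      fix x y assume xy: "x \<in> F'" "y \<in> F'" "restrict (\<lambda>i. enc i x) K' = restrict (\<lambda>i. enc i y) K'"
      have "\<forall>i\<in>K'. \<phi> i (fr x) = \<phi> i (fr y)"
      proof
        fix i assume "i \<in> K'"
        hence "enc i x = enc i y" using xy(3) by (metis restrict_apply')
        thus "\<phi> i (fr x) = \<phi> i (fr y)" using encinj xy by blast
      qed
      moreover have "fr x \<in> F" "fr y \<in> F" using frF xy by auto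
      ultimately have "fr x = fr y" using Gk that by blast
      thus "x = y" using frinj xy by (meson inj_onD)
    qed
    show "\<exists>(h :: nat \<Rightarrow> nat \<Rightarrow> nat) (g :: (nat \<Rightarrow> nat) \<Rightarrow> nat).
            (\<forall>j\<in>H. real (card (h j ` enc j ` F')) \<le> 2 powr b) \<and>
            (\<forall>f\<in>F'. g (restrict (\<lambda>j. h j (enc j f)) H) = enc i f)"
      if i: "i < N" and H: "H \<subseteq> {..<N} - {i} \<and> card H = D" for i H
    proof -
      have GG: "(\<forall>j\<in>H. real (card (\<mu> i j ` \<phi> j ` F)) \<le> 2 powr b) \<and>
      (\<forall>f1\<in>F. \<forall>f2\<in>F. (\<forall>j\<in>H. \<mu> i j (\<phi> j f1) = \<mu> i j (\<phi> j f2)) \<longrightarrow> \<phi> i f1 = \<phi> i f2)"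
        using Gr i H by blast
      note G1 = conjunct1[OF GG] and G2 = conjunct2[OF GG]
      have cW: "countable (\<mu> i j ` \<phi> j ` F)" for j using fin by (simp add: countable_finite)
      define h where "h j y = to_nat_on (\<mu> i j ` \<phi> j ` F) (\<mu> i j (from_nat_into (\<phi> j ` F) y))" for j y
      have hx: "h j (enc j x) = to_nat_on (\<mu> i j ` \<phi> j ` F) (\<mu> i j (\<phi> j (fr x)))" if "x \<in> F'" for j x
        using that frF cV by (simp add: h_def enc_def)
      have hinj: "h j (enc j x) = h j (enc j y) \<longleftrightarrow> \<mu> i j (\<phi> j (fr x)) = \<mu> i j (\<phi> j (fr y))"
        if "x \<in> F'" "y \<in> F'" for j x y
        using that frF cW by (simp add: hx to_nat_on_inj)
      define msg where "msg x = restrict (\<lambda>j. h j (enc j x)) H" for x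
      define g where "g m = enc i (SOME x. x \<in> F' \<and> msg x = m)" for m
      have "\<forall>j\<in>H. real (card (h j ` enc j ` F')) \<le> 2 powr b"
      proof
        fix j assume j: "j \<in> H"
        have "h j ` enc j ` F' = to_nat_on (\<mu> i j ` \<phi> j ` F) ` (\<mu> i j ` \<phi> j ` fr ` F')"
          by (auto simp: image_image hx)
        hence "card (h j ` enc j ` F') \<le> card (\<mu> i j ` \<phi> j ` F)" using frimg
          by (simp add: card_image_le fin)
        thus "real (card (h j ` enc j ` F')) \<le> 2 powr b" using G1 j by (meson of_nat_le_iff order_trans)
      qed
      moreover have "\<forall>f\<in>F'. g (msg f) = enc i f"
      proof
        fix x assume x: "x \<in> F'"
        define y where "y = (SOME y. y \<in> F' \<and> msg y = msg x)"
        have y: "y \<in> F' \<and> msg y = msg x" unfolding y_def by (rule someI[of _ x]) (use x in auto)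
        have "\<forall>j\<in>H. \<mu> i j (\<phi> j (fr y)) = \<mu> i j (\<phi> j (fr x))"
        proof
          fix j assume jH: "j \<in> H"
          have "msg y j = msg x j" using y by simp
          hence "h j (enc j y) = h j (enc j x)" using jH unfolding msg_def by simp
          thus "\<mu> i j (\<phi> j (fr y)) = \<mu> i j (\<phi> j (fr x))" using hinj x y by blast
        qed
        hence "\<phi> i (fr y) = \<phi> i (fr x)" using G2 frF x y by blast
        hence "enc i y = enc i x" using encinj x y by blast
        thus "g (msg x) = enc i x" by (simp add: g_def y_def)
      qed
      ultimately show ?thesis unfolding msg_def by blast
    qed
  qed
  moreover have "card F' = card F" unfolding F'_def using cF by (intro card_image inj_on_to_nat_on)
  ultimately show ?thesis by blast
qed



lemma cutset:
  assumes C: "exact_repair_code N K D a b F enc" and K: "0 < K" "K \<le> D" "D < N"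
  shows "log 2 (real (card F)) \<le> (\<Sum>j<K. min a ((real D - real j) * b))"
proof -
  have fin: "finite F" using C unfolding exact_repair_code_def by (elim conjE) assumption
  have ne: "F \<noteq> {}" using C unfolding exact_repair_code_def by (elim conjE) assumption
  have Cn: "\<forall>i<N. real (card (enc i ` F)) \<le> 2 powr a" using C unfolding exact_repair_code_def by (elim conjE) assumption
  have Ck: "\<forall>K'. K' \<subseteq> {..<N} \<and> card K' = K \<longrightarrow> inj_on (\<lambda>f. restrict (\<lambda>i. enc i f) K') F"
    using C unfolding exact_repair_code_def by (elim conjE) assumption
  have Cr: "\<forall>i<N. \<forall>H. H \<subseteq> {..<N} - {i} \<and> card H = D \<longrightarrow>
        (\<exists>(h :: nat \<Rightarrow> nat \<Rightarrow> nat) (g :: (nat \<Rightarrow> nat) \<Rightarrow> nat).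
            (\<forall>j\<in>H. real (card (h j ` enc j ` F)) \<le> 2 powr b) \<and>
            (\<forall>f\<in>F. g (restrict (\<lambda>j. h j (enc j f)) H) = enc i f))"
    using C unfolding exact_repair_code_def by (elim conjE) assumption
  define E where "E j = {Suc j..D}" for j :: nat
  define H where "H j = {..<j} \<union> E j" for j
  have Hsub: "H j \<subseteq> {..<N} - {j}" if "j < K" for j using that K by (auto simp: H_def E_def)
  have Hcard: "card (H j) = D" if "j < K" for j
  proof -
    have "card (H j) = card {..<j} + card (E j)" unfolding H_def E_def
      by (rule card_Un_disjoint) auto
    thus ?thesis using that K by (simp add: E_def)
  qed
  have ex: "\<forall>j\<in>{..<K}. \<exists>p :: (nat \<Rightarrow> nat \<Rightarrow> nat) \<times> ((nat \<Rightarrow> nat) \<Rightarrow> nat). (\<forall>l\<in>H j. real (card (fst p l ` enc l ` F)) \<le> 2 powr b) \<and>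
            (\<forall>f\<in>F. snd p (restrict (\<lambda>l. fst p l (enc l f)) (H j)) = enc j f)"
  proof
    fix j assume j: "j \<in> {..<K}"
    hence "j < N" using K by auto
    have "H j \<subseteq> {..<N} - {j} \<and> card (H j) = D" using Hsub[of j] Hcard[of j] j by auto
    from Cr[rule_format, OF \<open>j < N\<close> this] obtain h :: "nat \<Rightarrow> nat \<Rightarrow> nat" and g :: "(nat \<Rightarrow> nat) \<Rightarrow> nat" where
      "(\<forall>l\<in>H j. real (card (h l ` enc l ` F)) \<le> 2 powr b) \<and>
            (\<forall>f\<in>F. g (restrict (\<lambda>l. h l (enc l f)) (H j)) = enc j f)" by blast
    thus "\<exists>p :: (nat \<Rightarrow> nat \<Rightarrow> nat) \<times> ((nat \<Rightarrow> nat) \<Rightarrow> nat). (\<forall>l\<in>H j. real (card (fst p l ` enc l ` F)) \<le> 2 powr b) \<and>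
            (\<forall>f\<in>F. snd p (restrict (\<lambda>l. fst p l (enc l f)) (H j)) = enc j f)"
      by (intro exI[of _ "(h, g)"]) simp
  qed
  from bchoice[OF ex] obtain p :: "nat \<Rightarrow> (nat \<Rightarrow> nat \<Rightarrow> nat) \<times> ((nat \<Rightarrow> nat) \<Rightarrow> nat)" where p0: "\<forall>j\<in>{..<K}. (\<forall>l\<in>H j. real (card (fst (p j) l ` enc l ` F)) \<le> 2 powr b) \<and>
            (\<forall>f\<in>F. snd (p j) (restrict (\<lambda>l. fst (p j) l (enc l f)) (H j)) = enc j f)" ..
  have p: "(\<forall>l\<in>H j. real (card (fst (p j) l ` enc l ` F)) \<le> 2 powr b) \<and>
            (\<forall>f\<in>F. snd (p j) (restrict (\<lambda>l. fst (p j) l (enc l f)) (H j)) = enc j f)" if "j < K" for j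
    using p0 that by simp
  define hh where "hh j = fst (p j)" for j
  define gg where "gg j = snd (p j)" for j
  have hb: "real (card (hh j l ` enc l ` F)) \<le> 2 powr b" if "j < K" "l \<in> H j" for j l
    using p[OF that(1)] that(2) by (simp add: hh_def)
  have gr: "gg j (restrict (\<lambda>l. hh j l (enc l f)) (H j)) = enc j f" if "j < K" "f \<in> F" for j f
    using p[OF that(1)] that(2) by (simp add: hh_def gg_def)
  define J where "J = {j. (real D - real j) * b \<le> a}"
  define G where "G j = (if j \<in> J then E j else {j})" for j
  define \<psi> where "\<psi> j l x = (if j \<in> J then hh j l x else x)" for j l x
  define \<Phi> where "\<Phi> f = restrict (\<lambda>j. restrict (\<lambda>l. \<psi> j l (enc l f)) (G j)) {..<K}" for f
  have det: "enc j f1 = enc j f2" if "f1 \<in> F" "f2 \<in> F" "\<Phi> f1 = \<Phi> f2" "j < K" for f1 f2 j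
    using that(4)
  proof (induction j rule: less_induct)
    case (less j)
    have eq: "restrict (\<lambda>l. \<psi> j l (enc l f1)) (G j) = restrict (\<lambda>l. \<psi> j l (enc l f2)) (G j)"
      using fun_cong[OF that(3), of j] less.prems by (simp add: \<Phi>_def)
    show ?case
    proof (cases "j \<in> J")
      case False
      thus ?thesis using fun_cong[OF eq, of j] by (simp add: G_def \<psi>_def)
    next
      case True
      have "restrict (\<lambda>l. hh j l (enc l f1)) (H j) = restrict (\<lambda>l. hh j l (enc l f2)) (H j)"
      proof (rule restrict_ext)
        fix l assume l: "l \<in> H j"
        show "hh j l (enc l f1) = hh j l (enc l f2)"
        proof (cases "l < j")
          case True
          thus ?thesis using less.IH[of l] less.prems by simp
        next
          case False
          hence "l \<in> E j" "l \<in> G j" using l True by (auto simp: H_def G_def)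
          thus ?thesis using fun_cong[OF eq, of l] True by (simp add: \<psi>_def)
        qed
      qed
      thus ?thesis using gr[OF less.prems that(1)] gr[OF less.prems that(2)] by metis
    qed
  qed
  have injP: "inj_on \<Phi> F"
  proof (rule inj_onI)
    fix f1 f2 assume f: "f1 \<in> F" "f2 \<in> F" "\<Phi> f1 = \<Phi> f2"
    have "inj_on (\<lambda>f. restrict (\<lambda>i. enc i f) {..<K}) F" using Ck K by auto
    moreover have "restrict (\<lambda>i. enc i f1) {..<K} = restrict (\<lambda>i. enc i f2) {..<K}"
      by (rule restrict_ext) (use det[OF f] in auto)
    ultimately show "f1 = f2" using f by (meson inj_onD)
  qed
  define T where "T = PiE {..<K} (\<lambda>j. PiE (G j) (\<lambda>l. \<psi> j l ` enc l ` F))"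
  have finG: "finite (G j)" for j by (simp add: G_def E_def)
  have "\<Phi> ` F \<subseteq> T" unfolding T_def \<Phi>_def by (auto simp: PiE_iff)
  hence "card F \<le> card T" using injP
  proof -
    have "finite T" unfolding T_def using fin finG by (intro finite_PiE) auto
    hence "card (\<Phi> ` F) \<le> card T" using \<open>\<Phi> ` F \<subseteq> T\<close> by (rule card_mono)
    thus ?thesis using card_image[OF injP] by simp
  qed
  also have "card T = (\<Prod>j<K. \<Prod>l\<in>G j. card (\<psi> j l ` enc l ` F))"
    unfolding T_def by (simp add: card_PiE finG)
  finally have cF0: "real (card F) \<le> real (\<Prod>j<K. \<Prod>l\<in>G j. card (\<psi> j l ` enc l ` F))"
    by (simp only: of_nat_le_iff)
  have cF: "real (card F) \<le> (\<Prod>j<K. \<Prod>l\<in>G j. real (card (\<psi> j l ` enc l ` F)))"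
    using cF0 unfolding of_nat_prod .
  also have "\<dots> \<le> (\<Prod>j<K. 2 powr (min a ((real D - real j) * b)))"
  proof (rule prod_mono, rule conjI)
    fix j assume j: "j \<in> {..<K}"
    show "0 \<le> (\<Prod>l\<in>G j. real (card (\<psi> j l ` enc l ` F)))" by (simp add: prod_nonneg)
    show "(\<Prod>l\<in>G j. real (card (\<psi> j l ` enc l ` F))) \<le> 2 powr (min a ((real D - real j) * b))"
    proof (cases "j \<in> J")
      case True
      have "(\<Prod>l\<in>G j. real (card (\<psi> j l ` enc l ` F))) \<le> (\<Prod>l\<in>E j. 2 powr b)"
      proof -
        have "(\<Prod>l\<in>G j. real (card (\<psi> j l ` enc l ` F))) = (\<Prod>l\<in>E j. real (card (hh j l ` enc l ` F)))"
          using True by (simp add: G_def \<psi>_def)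
        also have "\<dots> \<le> (\<Prod>l\<in>E j. 2 powr b)"
          by (rule prod_mono) (use j hb in \<open>auto simp: H_def\<close>)
        finally show ?thesis .
      qed
      also have "\<dots> = 2 powr ((real D - real j) * b)"
        using j K by (simp add: E_def powr_realpow[symmetric] powr_powr[symmetric] of_nat_diff mult.commute flip: powr_sum)
      finally show ?thesis using True by (simp add: J_def min_def)
    next
      case False
      have "(\<Prod>l\<in>G j. real (card (\<psi> j l ` enc l ` F))) = real (card (enc j ` F))"
        using False by (simp add: G_def \<psi>_def)
      also have "\<dots> \<le> 2 powr a" using Cn j K by auto
      finally show ?thesis using False by (simp add: J_def min_def)
    qed
  qed
  also have "\<dots> = 2 powr (\<Sum>j<K. min a ((real D - real j) * b))" by (simp add: powr_sum)
  finally have "real (card F) \<le> 2 powr (\<Sum>j<K. min a ((real D - real j) * b))" .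
  moreover have "0 < real (card F)" using fin ne by (simp add: card_gt_0_iff)
  ultimately have "log 2 (real (card F)) \<le> log 2 (2 powr (\<Sum>j<K. min a ((real D - real j) * b)))"
    by (subst log_le_cancel_iff) auto
  moreover have "log 2 (2 powr (\<Sum>j<K. min a ((real D - real j) * b))) = (\<Sum>j<K. min a ((real D - real j) * b))"
    by (rule log_powr_cancel) auto
  ultimately show ?thesis by linarith
qed


definition Sset :: "nat \<Rightarrow> nat \<Rightarrow> nat \<Rightarrow> real \<Rightarrow> real \<Rightarrow> real set" where
  "Sset n k d \<alpha> \<gamma> = {log 2 (real (card F)) / t | t F enc.
      t > 0 \<and> exact_repair_code n k d (t * \<alpha>) (t * \<gamma> / real d) F enc}"

lemma C_exact_Sset: "C_exact n k d \<alpha> \<gamma> = Sup (Sset n k d \<alpha> \<gamma>)"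
  unfolding C_exact_def Sset_def ..

lemma Sset_le:
  assumes K: "0 < K" "K \<le> D" "D < N" and v: "v \<in> Sset N K D \<alpha> \<gamma>"
  shows "v \<le> C_func K D \<alpha> \<gamma>"
proof -
  obtain t F enc where t: "t > 0" and C: "exact_repair_code N K D (t * \<alpha>) (t * \<gamma> / real D) F enc"
    and vdef: "v = log 2 (real (card F)) / t"
    using v unfolding Sset_def by blast
  have "log 2 (real (card F)) \<le> (\<Sum>j<K. min (t * \<alpha>) ((real D - real j) * (t * \<gamma> / real D)))"
    by (rule cutset[OF C K])
  also have "\<dots> = (\<Sum>j<K. t * min \<alpha> ((real D - real j) / real D * \<gamma>))"
  proof (rule sum.cong[OF refl])
    fix j
    have "(real D - real j) * (t * \<gamma> / real D) = t * ((real D - real j) / real D * \<gamma>)" by simp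
    thus "min (t * \<alpha>) ((real D - real j) * (t * \<gamma> / real D)) = t * min \<alpha> ((real D - real j) / real D * \<gamma>)"
      using t by (simp add: min_mult_distrib_left mult_ac)
  qed
  also have "\<dots> = t * C_func K D \<alpha> \<gamma>" unfolding C_func_def by (simp add: sum_distrib_left)
  finally show ?thesis using t vdef by (simp add: divide_le_eq mult.commute)
qed

lemma Sset_ne:
  assumes "0 \<le> \<alpha>" "0 \<le> \<gamma>"
  shows "Sset N K D \<alpha> \<gamma> \<noteq> {}"
proof -
  have "exact_repair_code N K D (1 * \<alpha>) (1 * \<gamma> / real D) {0} (\<lambda>i f. 0)"
    unfolding exact_repair_code_def
  proof (intro conjI allI impI)
    show "real (card ((\<lambda>f. 0::nat) ` {0::nat})) \<le> 2 powr (1 * \<alpha>)" for i using assms by (simp add: ge_one_powr_ge_zero)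
    show "\<exists>(h :: nat \<Rightarrow> nat \<Rightarrow> nat) (g :: (nat \<Rightarrow> nat) \<Rightarrow> nat).
            (\<forall>j\<in>H. real (card (h j ` (\<lambda>f. 0) ` {0::nat})) \<le> 2 powr (1 * \<gamma> / real D)) \<and>
            (\<forall>f\<in>{0}. g (restrict (\<lambda>j. h j 0) H) = 0)" for H
      by (rule exI[of _ "\<lambda>j x. 0"], rule exI[of _ "\<lambda>m. 0"]) (use assms in \<open>simp add: ge_one_powr_ge_zero\<close>)
  qed auto
  hence "log 2 (real (card {0::nat})) / 1 \<in> Sset N K D \<alpha> \<gamma>" unfolding Sset_def
    by (intro CollectI exI[of _ 1] exI[of _ "{0::nat}"] exI[of _ "\<lambda>i f. 0::nat"]) simp
  thus ?thesis by blast
qed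

lemma Cexact_le:
  assumes K: "0 < K" "K \<le> D" "D < N" and "0 \<le> \<alpha>" "0 \<le> \<gamma>"
  shows "C_exact N K D \<alpha> \<gamma> \<le> C_func K D \<alpha> \<gamma>"
  unfolding C_exact_Sset by (rule cSup_least[OF Sset_ne[OF assms(4,5)]]) (rule Sset_le[OF K])

lemma Sset_bdd:
  assumes K: "0 < K" "K \<le> D" "D < N"
  shows "bdd_above (Sset N K D \<alpha> \<gamma>)"
  using Sset_le[OF K] by (meson bdd_aboveI)


lemma gcode_mono:
  assumes "gcode N K D A B F \<phi> \<mu>" "A \<le> A'" "B \<le> B'"
  shows "gcode N K D A' B' F \<phi> \<mu>"
proof -
  have b1: "\<forall>i<N. real (card (\<phi> i ` F)) \<le> A" using assms(1) unfolding gcode_def by (elim conjE) assumption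
  have b2: "\<forall>i<N. \<forall>H. H \<subseteq> {..<N} - {i} \<and> card H = D \<longrightarrow>
      (\<forall>j\<in>H. real (card (\<mu> i j ` \<phi> j ` F)) \<le> B) \<and>
      (\<forall>f1\<in>F. \<forall>f2\<in>F. (\<forall>j\<in>H. \<mu> i j (\<phi> j f1) = \<mu> i j (\<phi> j f2)) \<longrightarrow> \<phi> i f1 = \<phi> i f2)"
    using assms(1) unfolding gcode_def by (elim conjE) assumption
  have a1: "\<forall>i<N. real (card (\<phi> i ` F)) \<le> A'" using b1 assms(2) by force
  have a2: "\<forall>i<N. \<forall>H. H \<subseteq> {..<N} - {i} \<and> card H = D \<longrightarrow>
      (\<forall>j\<in>H. real (card (\<mu> i j ` \<phi> j ` F)) \<le> B') \<and>
      (\<forall>f1\<in>F. \<forall>f2\<in>F. (\<forall>j\<in>H. \<mu> i j (\<phi> j f1) = \<mu> i j (\<phi> j f2)) \<longrightarrow> \<phi> i f1 = \<phi> i f2)"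
  proof (intro allI impI conjI)
    fix i H assume "i < N" "H \<subseteq> {..<N} - {i} \<and> card H = D"
    note X = b2[rule_format, OF this]
    show "\<forall>j\<in>H. real (card (\<mu> i j ` \<phi> j ` F)) \<le> B'" using conjunct1[OF X] assms(3) by force
    show "\<forall>f1\<in>F. \<forall>f2\<in>F. (\<forall>j\<in>H. \<mu> i j (\<phi> j f1) = \<mu> i j (\<phi> j f2)) \<longrightarrow> \<phi> i f1 = \<phi> i f2"
      by (rule conjunct2[OF X])
  qed
  show ?thesis using assms(1) a1 a2 unfolding gcode_def by (elim conjE) (intro conjI; assumption)
qed

lemma ln_ratio_lim: "(\<lambda>n. ln (real n + 2) / (c + ln (real n + 2))) \<longlonglongrightarrow> 1"
  by real_asymp

lemma achieve:
  fixes Lf au bu :: nat and c1 \<alpha> \<gamma> :: real and FF :: "nat \<Rightarrow> 'f set"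
    and phh :: "nat \<Rightarrow> nat \<Rightarrow> 'f \<Rightarrow> 'v" and muu :: "nat \<Rightarrow> nat \<Rightarrow> nat \<Rightarrow> 'v \<Rightarrow> 'm"
  assumes K: "0 < K" "K \<le> D" "D < N" and pos: "\<alpha> > 0" "\<gamma> > 0" "au > 0" "bu > 0" "c1 \<ge> 1"
    and codes: "\<And>Q. Q \<ge> 2 \<Longrightarrow> gcode N K D ((c1 * real Q) ^ au) ((c1 * real Q) ^ bu) (FF Q) (phh Q) (muu Q)
                    \<and> card (FF Q) = Q ^ Lf"
  shows "real Lf * min (\<alpha> / real au) (\<gamma> / (real D * real bu)) \<le> C_exact N K D \<alpha> \<gamma>"
proof -
  define m where "m = max (real au / \<alpha>) (real bu * real D / \<gamma>)"
  have Dpos: "real D > 0" using K by simp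
  have "real au / \<alpha> \<le> m" by (simp add: m_def)
  hence m1: "real au \<le> m * \<alpha>" using pos by (simp add: pos_divide_le_eq)
  have "real bu * real D / \<gamma> \<le> m" by (simp add: m_def)
  hence m2: "real bu * real D \<le> m * \<gamma>" using pos by (simp add: pos_divide_le_eq)
  have mpos: "m > 0" using pos by (simp add: m_def less_max_iff_disj)
  have minm: "min (\<alpha> / real au) (\<gamma> / (real D * real bu)) = 1 / m"
    using pos Dpos unfolding m_def by (auto simp: min_def max_def field_simps)
  define v where "v n = real Lf / m * (ln (real n + 2) / (ln c1 + ln (real n + 2)))" for n
  have vin: "v n \<le> C_exact N K D \<alpha> \<gamma>" for n
  proof -
    define Q where "Q = n + 2"
    have Q2: "Q \<ge> 2" by (simp add: Q_def)
    have rQ: "real Q \<ge> 2" using Q2 by simp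
    have "1 * 2 \<le> c1 * real Q" using pos(5) rQ by (intro mult_mono) auto
    hence cQ: "c1 * real Q > 1" by linarith
    define L where "L = log 2 (c1 * real Q)"
    have Lpos: "L > 0" using cQ by (simp add: L_def)
    define t where "t = m * L"
    have tpos: "t > 0" using mpos Lpos by (simp add: t_def)
    have pw: "(c1 * real Q) ^ r = 2 powr (real r * L)" for r :: nat
    proof -
      have "(c1 * real Q) ^ r = (c1 * real Q) powr real r" using cQ by (simp add: powr_realpow)
      also have "\<dots> = (2 powr L) powr real r" using cQ by (simp add: L_def)
      also have "\<dots> = 2 powr (real r * L)" by (simp add: powr_powr mult.commute)
      finally show ?thesis .
    qed
    have A: "(c1 * real Q) ^ au \<le> 2 powr (t * \<alpha>)"
      unfolding pw t_def using m1 Lpos by (simp add: mult_right_mono mult_ac)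
    have B: "(c1 * real Q) ^ bu \<le> 2 powr (t * \<gamma> / real D)"
    proof -
      have "real bu * L \<le> t * \<gamma> / real D"
        using m2 Lpos Dpos unfolding t_def by (simp add: field_simps mult_right_mono mult_ac)
      thus ?thesis unfolding pw by simp
    qed
    have G: "gcode N K D (2 powr (t * \<alpha>)) (2 powr (t * \<gamma> / real D)) (FF Q) (phh Q) (muu Q)"
      using gcode_mono[OF conjunct1[OF codes[OF Q2]] A B] .
    from gcode_transfer[OF G] obtain F' enc where
      E: "exact_repair_code N K D (t * \<alpha>) (t * \<gamma> / real D) F' enc" and cF: "card F' = card (FF Q)" by blast
    have mem: "log 2 (real (card F')) / t \<in> Sset N K D \<alpha> \<gamma>"
      unfolding Sset_def using tpos E by blast
    have "log 2 (real (card F')) / t = v n"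
    proof -
      have "real (card F') = real Q ^ Lf" using cF conjunct2[OF codes[OF Q2]] by simp
      hence l1: "log 2 (real (card F')) = real Lf * ln (real Q) / ln 2" using Q2 by (simp add: log_def ln_realpow)
      have l2: "L = (ln c1 + ln (real Q)) / ln 2" using pos Q2 by (simp add: L_def log_def ln_mult)
      have pq: "ln c1 + ln (real n + 2) > 0" using pos(5)
        by (smt (verit, best) ln_ge_zero ln_gt_zero of_nat_0_le_iff)
      have "log 2 (real (card F')) / t = (real Lf * ln (real Q) / ln 2) / (m * ((ln c1 + ln (real Q)) / ln 2))"
        by (simp add: t_def l1 l2)
      also have "\<dots> = v n" using pq mpos by (simp add: v_def Q_def field_simps)
      finally show ?thesis .
    qed
    thus ?thesis using cSup_upper[OF mem Sset_bdd[OF K]] by (simp add: C_exact_Sset)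
  qed
  have "v \<longlonglongrightarrow> real Lf / m * 1" unfolding v_def by (intro tendsto_mult_left ln_ratio_lim)
  hence "real Lf / m \<le> C_exact N K D \<alpha> \<gamma>" using vin by (intro LIMSEQ_le_const2) auto
  thus ?thesis using minm by simp
qed

lemma poly_unique:
  fixes c :: "nat \<Rightarrow> int" and X :: "int set"
  assumes "finite X" "L \<le> card X" "\<forall>x\<in>X. (\<Sum>a<L. c a * x^a) = 0"
  shows "\<forall>a<L. c a = 0"
proof -
  define p where "p = (\<Sum>a<L. monom (c a) a)"
  have pv: "poly p x = (\<Sum>a<L. c a * x^a)" for x
    by (simp add: p_def poly_sum poly_monom)
  have pc: "coeff p i = (if i < L then c i else 0)" for i
    by (simp add: p_def coeff_sum coeff_monom)
  have "p = 0"
  proof (rule ccontr)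
    assume nz: "p \<noteq> 0"
    have "L > 0" using nz pc by (metis leading_coeff_0_iff not_gr_zero not_less_zero)
    have dg: "degree p \<le> L - 1" by (rule degree_le) (auto simp: pc)
    have "X \<subseteq> {x. poly p x = 0}" using assms(3) pv by auto
    hence "card X \<le> card {x. poly p x = 0}" using poly_roots_finite[OF nz] card_mono by blast
    also have "\<dots> \<le> degree p" by (rule card_poly_roots_bound[OF nz])
    finally show False using dg assms(2) \<open>L > 0\<close> by linarith
  qed
  thus ?thesis using pc by (metis coeff_0)
qed

lemma inter_card:
  assumes "A \<subseteq> U" "B \<subseteq> U" "finite U"
  shows "card A + card B \<le> card U + card (A \<inter> B)"
proof -
  have fA: "finite A" "finite B" using assms finite_subset by auto
  have "card A + card B = card (A \<union> B) + card (A \<inter> B)" using card_Un_Int[OF fA] .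
  moreover have "card (A \<union> B) \<le> card U" using assms by (intro card_mono) auto
  ultimately show ?thesis by linarith
qed

lemma card_Str1:
  assumes "i < N" "1 \<le> w"
  shows "card {S. S \<subseteq> {..<N} \<and> card S = w \<and> i \<in> S} = (N - 1) choose (w - 1)"
proof -
  define A where "A = {T. T \<subseteq> {..<N} - {i} \<and> card T = w - 1}"
  have "{S. S \<subseteq> {..<N} \<and> card S = w \<and> i \<in> S} = insert i ` A"
  proof (intro equalityI subsetI)
    fix S assume S: "S \<in> {S. S \<subseteq> {..<N} \<and> card S = w \<and> i \<in> S}"
    hence fS: "finite S" using finite_subset by blast
    have "S - {i} \<in> A" using S fS by (auto simp: A_def)
    moreover have "S = insert i (S - {i})" using S by auto
    ultimately show "S \<in> insert i ` A" by blast
  next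
    fix S assume "S \<in> insert i ` A"
    then obtain T where T: "T \<in> A" "S = insert i T" by blast
    have fT: "finite T" using T(1) unfolding A_def using finite_subset by blast
    have "i \<notin> T" using T(1) by (auto simp: A_def)
    hence "card S = w" using T fT assms(2) by (auto simp: A_def)
    thus "S \<in> {S. S \<subseteq> {..<N} \<and> card S = w \<and> i \<in> S}" using T assms(1) by (auto simp: A_def)
  qed
  moreover have "inj_on (insert i) A" by (rule inj_onI) (auto simp: A_def)
  moreover have "card A = (N - 1) choose (w - 1)" unfolding A_def
    using n_subsets[of "{..<N} - {i}" "w - 1"] assms(1) by simp
  ultimately show ?thesis by (simp add: card_image)
qed

lemma card_Str2:
  assumes "i < N" "j < N" "i \<noteq> j" "2 \<le> w"
  shows "card {S. S \<subseteq> {..<N} \<and> card S = w \<and> i \<in> S \<and> j \<in> S} = (N - 2) choose (w - 2)"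
proof -
  define A where "A = {T. T \<subseteq> {..<N} - {i, j} \<and> card T = w - 2}"
  have "{S. S \<subseteq> {..<N} \<and> card S = w \<and> i \<in> S \<and> j \<in> S} = (\<lambda>T. insert i (insert j T)) ` A"
  proof (intro equalityI subsetI)
    fix S assume S: "S \<in> {S. S \<subseteq> {..<N} \<and> card S = w \<and> i \<in> S \<and> j \<in> S}"
    hence fS: "finite S" using finite_subset by blast
    have "S - {i, j} \<in> A" using S fS assms(3) by (auto simp: A_def)
    moreover have "S = insert i (insert j (S - {i, j}))" using S by auto
    ultimately show "S \<in> (\<lambda>T. insert i (insert j T)) ` A" by blast
  next
    fix S assume "S \<in> (\<lambda>T. insert i (insert j T)) ` A"
    then obtain T where T: "T \<in> A" "S = insert i (insert j T)" by blast
    have fT: "finite T" using T(1) unfolding A_def using finite_subset by blast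
    have "i \<notin> T" "j \<notin> T" using T(1) by (auto simp: A_def)
    hence "card S = w" using T fT assms(2,3,4) by (auto simp: A_def)
    thus "S \<in> {S. S \<subseteq> {..<N} \<and> card S = w \<and> i \<in> S \<and> j \<in> S}" using T assms(1,2) by (auto simp: A_def)
  qed
  moreover have "inj_on (\<lambda>T. insert i (insert j T)) A" by (rule inj_onI) (auto simp: A_def)
  moreover have "card ({..<N} - {i, j}) = N - 2" using assms(1-3) by (simp add: card_Diff_subset)
  hence "card A = (N - 2) choose (w - 2)" unfolding A_def
    using n_subsets[of "{..<N} - {i, j}" "w - 2"] by simp
  ultimately show ?thesis by (simp add: card_image)
qed

lemma card_PiE_bound:
  assumes "V \<subseteq> PiE A (\<lambda>_. {..R::nat})" "finite A" "card A \<le> e"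
  shows "real (card V) \<le> (real R + 1) ^ e"
proof -
  have "card V \<le> card (PiE A (\<lambda>_. {..R::nat}))" using assms by (intro card_mono finite_PiE) auto
  also have "\<dots> = (R + 1) ^ card A" using assms(2) by (simp add: card_PiE)
  finally have "real (card V) \<le> (real R + 1) ^ card A" by (metis of_nat_Suc of_nat_le_iff of_nat_power Suc_eq_plus1 add.commute)
  also have "\<dots> \<le> (real R + 1) ^ e" using assms(3) by (intro power_increasing) auto
  finally show ?thesis .
qed


lemma poly_unique_nat:
  fixes g1 g2 :: "nat \<Rightarrow> nat" and X :: "nat set"
  assumes "finite X" "L \<le> card X" "\<forall>x\<in>X. (\<Sum>l<L. g1 l * x ^ l) = (\<Sum>l<L. g2 l * x ^ l)"
  shows "\<forall>l<L. g1 l = g2 l"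
proof -
  have "\<forall>l<L. int (g1 l) - int (g2 l) = 0"
  proof (rule poly_unique[of "int ` X"])
    show "finite (int ` X)" using assms(1) by simp
    show "L \<le> card (int ` X)" using assms(2) by (simp add: card_image)
    show "\<forall>x\<in>int ` X. (\<Sum>a<L. (int (g1 a) - int (g2 a)) * x ^ a) = 0"
    proof
      fix x assume "x \<in> int ` X"
      then obtain y where y: "y \<in> X" "x = int y" by blast
      have "(\<Sum>a<L. (int (g1 a) - int (g2 a)) * x ^ a) = int (\<Sum>l<L. g1 l * y ^ l) - int (\<Sum>l<L. g2 l * y ^ l)"
        by (simp add: y(2) sum_subtractf left_diff_distrib)
      also have "\<dots> = 0" using assms(3) y(1) by simp
      finally show "(\<Sum>a<L. (int (g1 a) - int (g2 a)) * x ^ a) = 0" .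
    qed
  qed
  thus ?thesis by simp
qed


definition Str :: "nat \<Rightarrow> nat \<Rightarrow> nat set set" where "Str N w = {S. S \<subseteq> {..<N} \<and> card S = w}"
definition evL :: "nat \<Rightarrow> (nat set \<Rightarrow> nat \<Rightarrow> nat) \<Rightarrow> nat set \<Rightarrow> nat \<Rightarrow> nat" where
  "evL Lc f S x = (\<Sum>l<Lc. f S l * x ^ l)"
definition LF :: "nat \<Rightarrow> nat \<Rightarrow> nat \<Rightarrow> nat \<Rightarrow> (nat set \<Rightarrow> nat \<Rightarrow> nat) set" where
  "LF N w Lc Q = PiE (Str N w) (\<lambda>S. PiE {..<Lc} (\<lambda>_. {..<Q}))"
definition Lphi :: "nat \<Rightarrow> nat \<Rightarrow> nat \<Rightarrow> nat \<Rightarrow> (nat set \<Rightarrow> nat \<Rightarrow> nat) \<Rightarrow> (nat set \<Rightarrow> nat)" where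
  "Lphi N w Lc i f = restrict (\<lambda>S. evL Lc f S i) {S \<in> Str N w. i \<in> S}"
definition Lmu :: "nat \<Rightarrow> nat \<Rightarrow> nat \<Rightarrow> nat \<Rightarrow> (nat set \<Rightarrow> nat) \<Rightarrow> (nat set \<Rightarrow> nat)" where
  "Lmu N w i j v = restrict v {S \<in> Str N w. i \<in> S \<and> j \<in> S}"

lemma finite_Str: "finite (Str N w)"
  unfolding Str_def by (rule finite_subset[of _ "Pow {..<N}"]) auto

lemma evL_bound:
  assumes "f \<in> LF N w Lc Q" "S \<in> Str N w" "x < N"
  shows "evL Lc f S x \<le> Q * Lc * N ^ Lc"
proof -
  have "f S l * x ^ l \<le> Q * N ^ Lc" if "l < Lc" for l
  proof -
    have "f S l < Q" using assms(1,2) that unfolding LF_def by (auto simp: PiE_iff)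
    moreover have "x ^ l \<le> N ^ Lc"
    proof -
      have "x ^ l \<le> N ^ l" using assms(3) by (intro power_mono) auto
      also have "\<dots> \<le> N ^ Lc" using assms(3) that by (intro power_increasing) auto
      finally show ?thesis .
    qed
    ultimately show ?thesis by (intro mult_mono) auto
  qed
  hence "evL Lc f S x \<le> card {..<Lc} * (Q * N ^ Lc)" unfolding evL_def
    using sum_bounded_above[of "{..<Lc}" "\<lambda>l. f S l * x ^ l" "Q * N ^ Lc"] by simp
  thus ?thesis by (simp add: mult_ac)
qed

lemma restrict_in_PiE_atMost:
  assumes "\<And>S. S \<in> A \<Longrightarrow> g S \<le> (R::nat)"
  shows "restrict g A \<in> PiE A (\<lambda>_. {..R})"
  using assms by (simp add: restrict_PiE_iff)

lemma layered_gcode: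
  assumes K: "0 < K" "K \<le> D" "D < N" and w: "N - K < w" "w \<le> N" and Q: "Q \<ge> 1"
    and Lc: "Lc = w - (N - K)"
  shows "gcode N K D (((real (Lc * N ^ Lc) + 1) * real Q) ^ ((N - 1) choose (w - 1)))
                     (((real (Lc * N ^ Lc) + 1) * real Q) ^ ((N - 2) choose (w - 2)))
                     (LF N w Lc Q) (Lphi N w Lc) (Lmu N w)
         \<and> card (LF N w Lc Q) = Q ^ (Lc * (N choose w))"
proof -
  define R where "R = Q * Lc * N ^ Lc"
  define c1 where "c1 = real (Lc * N ^ Lc) + 1"
  have Rc: "real R + 1 \<le> c1 * real Q" using Q unfolding R_def c1_def by (simp add: algebra_simps)
  have R0: "0 \<le> real R + 1" by simp
  have finF: "finite (LF N w Lc Q)" unfolding LF_def by (intro finite_PiE finite_Str) auto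
  have neF: "LF N w Lc Q \<noteq> {}" unfolding LF_def using Q by (simp add: PiE_eq_empty_iff lessThan_empty_iff)
  have nodes: "real (card (Lphi N w Lc i ` LF N w Lc Q)) \<le> (c1 * real Q) ^ ((N - 1) choose (w - 1))"
    if i: "i < N" for i
  proof -
    have "Lphi N w Lc i ` LF N w Lc Q \<subseteq> PiE {S \<in> Str N w. i \<in> S} (\<lambda>_. {..R})"
    proof (rule image_subsetI)
      fix f assume "f \<in> LF N w Lc Q"
      thus "Lphi N w Lc i f \<in> PiE {S \<in> Str N w. i \<in> S} (\<lambda>_. {..R})"
        unfolding Lphi_def R_def using evL_bound i by (intro restrict_in_PiE_atMost) auto
    qed
    moreover have "card {S \<in> Str N w. i \<in> S} \<le> (N - 1) choose (w - 1)"
      using card_Str1[OF i, of w] w unfolding Str_def by simp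
    ultimately have "real (card (Lphi N w Lc i ` LF N w Lc Q)) \<le> (real R + 1) ^ ((N - 1) choose (w - 1))"
      using finite_Str by (intro card_PiE_bound) auto
    also have "\<dots> \<le> (c1 * real Q) ^ ((N - 1) choose (w - 1))" using Rc by (intro power_mono) auto
    finally show ?thesis .
  qed
  have recon: "\<forall>f1\<in>LF N w Lc Q. \<forall>f2\<in>LF N w Lc Q. (\<forall>i\<in>K'. Lphi N w Lc i f1 = Lphi N w Lc i f2) \<longrightarrow> f1 = f2"
    if KK: "K' \<subseteq> {..<N} \<and> card K' = K" for K'
  proof (intro ballI impI)
    fix f1 f2 assume f: "f1 \<in> LF N w Lc Q" "f2 \<in> LF N w Lc Q" and eq: "\<forall>i\<in>K'. Lphi N w Lc i f1 = Lphi N w Lc i f2"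
    show "f1 = f2"
    proof (rule PiE_ext)
      show "f1 \<in> PiE (Str N w) (\<lambda>S. PiE {..<Lc} (\<lambda>_. {..<Q}))" "f2 \<in> PiE (Str N w) (\<lambda>S. PiE {..<Lc} (\<lambda>_. {..<Q}))"
        using f unfolding LF_def by auto
      fix S assume S: "S \<in> Str N w"
      have cS: "Lc \<le> card (S \<inter> K')"
      proof -
        have "card S + card K' \<le> card {..<N} + card (S \<inter> K')"
          using S KK by (intro inter_card) (auto simp: Str_def)
        thus ?thesis using S KK Lc w by (simp add: Str_def)
      qed
      have "\<forall>l<Lc. f1 S l = f2 S l"
      proof (rule poly_unique_nat)
        show "finite (S \<inter> K')" using KK finite_subset by blast
        show "Lc \<le> card (S \<inter> K')" by (rule cS)
        show "\<forall>x\<in>S \<inter> K'. (\<Sum>l<Lc. f1 S l * x ^ l) = (\<Sum>l<Lc. f2 S l * x ^ l)"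
        proof
          fix x assume x: "x \<in> S \<inter> K'"
          have "Lphi N w Lc x f1 S = Lphi N w Lc x f2 S" using eq x by simp
          thus "(\<Sum>l<Lc. f1 S l * x ^ l) = (\<Sum>l<Lc. f2 S l * x ^ l)" using S x by (simp add: Lphi_def evL_def)
        qed
      qed
      moreover have "f1 S \<in> PiE {..<Lc} (\<lambda>_. {..<Q})" "f2 S \<in> PiE {..<Lc} (\<lambda>_. {..<Q})"
        using f S unfolding LF_def by auto
      ultimately show "f1 S = f2 S" by (intro PiE_ext[of "f1 S" "{..<Lc}" _ "f2 S"]) auto
    qed
  qed
  have repair: "(\<forall>j\<in>H. real (card (Lmu N w i j ` Lphi N w Lc j ` LF N w Lc Q)) \<le> (c1 * real Q) ^ ((N - 2) choose (w - 2))) \<and>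
      (\<forall>f1\<in>LF N w Lc Q. \<forall>f2\<in>LF N w Lc Q. (\<forall>j\<in>H. Lmu N w i j (Lphi N w Lc j f1) = Lmu N w i j (Lphi N w Lc j f2)) \<longrightarrow> Lphi N w Lc i f1 = Lphi N w Lc i f2)"
    if i: "i < N" and HH: "H \<subseteq> {..<N} - {i} \<and> card H = D" for i H
  proof (intro conjI ballI impI)
    fix j assume j: "j \<in> H"
    have jN: "j < N" "j \<noteq> i" using j HH by auto
    have "Lmu N w i j ` Lphi N w Lc j ` LF N w Lc Q \<subseteq> PiE {S \<in> Str N w. i \<in> S \<and> j \<in> S} (\<lambda>_. {..R})"
    proof (rule image_subsetI)
      fix v assume "v \<in> Lphi N w Lc j ` LF N w Lc Q"
      then obtain f where f: "f \<in> LF N w Lc Q" "v = Lphi N w Lc j f" by blast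
      have "Lmu N w i j v = restrict (\<lambda>S. evL Lc f S j) {S \<in> Str N w. i \<in> S \<and> j \<in> S}"
        unfolding f(2) Lmu_def Lphi_def by (intro restrict_ext) auto
      thus "Lmu N w i j v \<in> PiE {S \<in> Str N w. i \<in> S \<and> j \<in> S} (\<lambda>_. {..R})"
        unfolding R_def using evL_bound f(1) jN by (simp only:) (intro restrict_in_PiE_atMost, auto)
    qed
    moreover have "card {S \<in> Str N w. i \<in> S \<and> j \<in> S} \<le> (N - 2) choose (w - 2)"
      using card_Str2[OF i jN(1) jN(2)[symmetric], of w] w K unfolding Str_def by simp
    ultimately have "real (card (Lmu N w i j ` Lphi N w Lc j ` LF N w Lc Q)) \<le> (real R + 1) ^ ((N - 2) choose (w - 2))"
      using finite_Str by (intro card_PiE_bound) auto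
    also have "\<dots> \<le> (c1 * real Q) ^ ((N - 2) choose (w - 2))" using Rc by (intro power_mono) auto
    finally show "real (card (Lmu N w i j ` Lphi N w Lc j ` LF N w Lc Q)) \<le> (c1 * real Q) ^ ((N - 2) choose (w - 2))" .
  next
    fix f1 f2 assume f: "f1 \<in> LF N w Lc Q" "f2 \<in> LF N w Lc Q"
      and eq: "\<forall>j\<in>H. Lmu N w i j (Lphi N w Lc j f1) = Lmu N w i j (Lphi N w Lc j f2)"
    show "Lphi N w Lc i f1 = Lphi N w Lc i f2" unfolding Lphi_def
    proof (rule restrict_ext)
      fix S assume S: "S \<in> {S \<in> Str N w. i \<in> S}"
      have cS: "Lc \<le> card (S \<inter> H)"
      proof -
        have "card (S - {i}) + card H \<le> card ({..<N} - {i}) + card ((S - {i}) \<inter> H)"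
          using S HH by (intro inter_card) (auto simp: Str_def)
        moreover have "(S - {i}) \<inter> H = S \<inter> H" using HH by auto
        moreover have "card (S - {i}) = w - 1" using S by (simp add: Str_def)
        moreover have "card ({..<N} - {i}) = N - 1" using i by simp
        ultimately show ?thesis using HH Lc w K by simp
      qed
      have "\<forall>l<Lc. f1 S l = f2 S l"
      proof (rule poly_unique_nat)
        show "finite (S \<inter> H)" using HH finite_subset by blast
        show "Lc \<le> card (S \<inter> H)" by (rule cS)
        show "\<forall>x\<in>S \<inter> H. (\<Sum>l<Lc. f1 S l * x ^ l) = (\<Sum>l<Lc. f2 S l * x ^ l)"
        proof
          fix x assume x: "x \<in> S \<inter> H"
          have "Lmu N w i x (Lphi N w Lc x f1) S = Lmu N w i x (Lphi N w Lc x f2) S" using eq x by simp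
          thus "(\<Sum>l<Lc. f1 S l * x ^ l) = (\<Sum>l<Lc. f2 S l * x ^ l)" using S x by (simp add: Lphi_def Lmu_def evL_def)
        qed
      qed
      thus "evL Lc f1 S i = evL Lc f2 S i" unfolding evL_def by (intro sum.cong) auto
    qed
  qed
  have cardF: "card (LF N w Lc Q) = Q ^ (Lc * (N choose w))"
  proof -
    have "card (LF N w Lc Q) = (\<Prod>S\<in>Str N w. Q ^ Lc)" unfolding LF_def
      using finite_Str by (simp add: card_PiE)
    also have "\<dots> = (Q ^ Lc) ^ card (Str N w)" by simp
    also have "card (Str N w) = N choose w" unfolding Str_def using n_subsets[of "{..<N}" w] by simp
    finally show ?thesis by (simp add: power_mult)
  qed
  show ?thesis unfolding gcode_def c1_def[symmetric]
    using finF neF nodes recon repair cardF by blast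
qed


lemma layered_bound:
  assumes K: "0 < K" "K \<le> D" "D < N" and w: "N - K < w" "w \<le> N" and pos: "\<alpha> > 0" "\<gamma> > 0"
  shows "real (w - (N - K)) * real N / real w * min \<alpha> (\<gamma> * (real N - 1) / (real D * (real w - 1)))
           \<le> C_exact N K D \<alpha> \<gamma>"
proof -
  define Lc where "Lc = w - (N - K)"
  define au where "au = (N - 1) choose (w - 1)"
  define bu where "bu = (N - 2) choose (w - 2)"
  define Cw where "Cw = N choose w"
  have w2: "w \<ge> 2" "N \<ge> 2" using K w by auto
  have aupos: "au > 0" unfolding au_def using w by simp
  have bupos: "bu > 0" unfolding bu_def using w by simp
  have c1: "real (Lc * N ^ Lc) + 1 \<ge> 1" by simp
  have ach: "real (Lc * Cw) * min (\<alpha> / real au) (\<gamma> / (real D * real bu)) \<le> C_exact N K D \<alpha> \<gamma>"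
  proof (rule achieve[OF K pos aupos bupos c1, where FF = "\<lambda>Q. LF N w Lc Q" and phh = "\<lambda>Q. Lphi N w Lc" and muu = "\<lambda>Q. Lmu N w"])
    fix Q :: nat assume "Q \<ge> 2"
    thus "gcode N K D (((real (Lc * N ^ Lc) + 1) * real Q) ^ au) (((real (Lc * N ^ Lc) + 1) * real Q) ^ bu)
           (LF N w Lc Q) (Lphi N w Lc) (Lmu N w) \<and> card (LF N w Lc Q) = Q ^ (Lc * Cw)"
      unfolding au_def bu_def Cw_def using layered_gcode[OF K w, of Q Lc] Lc_def by auto
  qed
  have e1: "w * Cw = N * au" unfolding Cw_def au_def using w2 by (simp add: times_binomial_minus1_eq)
  have e2: "(w - 1) * au = (N - 1) * bu"
  proof -
    have "N - 1 - 1 = N - 2" "w - 1 - 1 = w - 2" by auto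
    thus ?thesis unfolding au_def bu_def using times_binomial_minus1_eq[of "w - 1" "N - 1"] w2 by simp
  qed
  have r1: "real w * real Cw = real N * real au" using e1 by (metis of_nat_mult)
  have r2: "(real w - 1) * real au = (real N - 1) * real bu" using e2 w2 by (metis of_nat_mult of_nat_diff of_nat_1 le_trans one_le_numeral)
  have Dpos: "real D > 0" using K by simp
  have "real (Lc * Cw) * min (\<alpha> / real au) (\<gamma> / (real D * real bu))
        = min (real Lc * real Cw * \<alpha> / real au) (real Lc * real Cw * \<gamma> / (real D * real bu))"
    by (simp add: min_mult_distrib_left)
  also have "real Lc * real Cw * \<alpha> / real au = real Lc * real N / real w * \<alpha>"
    using r1 aupos w2 by (simp add: field_simps)
  also have "real Lc * real Cw * \<gamma> / (real D * real bu) = real Lc * real N / real w * (\<gamma> * (real N - 1) / (real D * (real w - 1)))"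
  proof -
    have bu_eq: "real bu = (real w - 1) * real au / (real N - 1)" using r2 w2 by (simp add: field_simps)
    have Cw_eq: "real Cw = real N * real au / real w" using r1 w2 by (simp add: field_simps)
    show ?thesis unfolding bu_eq Cw_eq using aupos w2 Dpos by (simp add: field_simps)
  qed
  also have "min (real Lc * real N / real w * \<alpha>) (real Lc * real N / real w * (\<gamma> * (real N - 1) / (real D * (real w - 1))))
     = real Lc * real N / real w * min \<alpha> (\<gamma> * (real N - 1) / (real D * (real w - 1)))"
    by (simp add: min_mult_distrib_left)
  finally show ?thesis using ach Lc_def by simp
qed


definition Pset :: "nat \<Rightarrow> nat \<Rightarrow> (nat \<times> nat) set" where
  "Pset K D = {(a, b). a < K \<and> a \<le> b \<and> b < D}"
definition Mx :: "nat \<Rightarrow> nat \<Rightarrow> (nat \<times> nat \<Rightarrow> nat) \<Rightarrow> nat \<Rightarrow> nat \<Rightarrow> nat" where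
  "Mx K D f a b = (if (min a b, max a b) \<in> Pset K D then f (min a b, max a b) else 0)"
definition PF :: "nat \<Rightarrow> nat \<Rightarrow> nat \<Rightarrow> (nat \<times> nat \<Rightarrow> nat) set" where
  "PF K D Q = PiE (Pset K D) (\<lambda>_. {..<Q})"
definition Pphi :: "nat \<Rightarrow> nat \<Rightarrow> nat \<Rightarrow> (nat \<times> nat \<Rightarrow> nat) \<Rightarrow> (nat \<Rightarrow> nat)" where
  "Pphi K D i f = restrict (\<lambda>b. \<Sum>a<D. Mx K D f a b * i ^ a) {..<D}"
definition Pmu :: "nat \<Rightarrow> nat \<Rightarrow> nat \<Rightarrow> (nat \<Rightarrow> nat) \<Rightarrow> nat" where
  "Pmu D i j v = (\<Sum>b<D. v b * i ^ b)"

lemma Mx_sym: "Mx K D f a b = Mx K D f b a"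
  unfolding Mx_def by (simp add: min.commute max.commute)

lemma Mx_zero: "K \<le> a \<Longrightarrow> K \<le> b \<Longrightarrow> Mx K D f a b = 0"
  unfolding Mx_def Pset_def by auto

lemma Mx_le: "f \<in> PF K D Q \<Longrightarrow> Mx K D f a b \<le> Q"
  unfolding Mx_def PF_def by (auto simp: PiE_iff less_imp_le)

lemma Mx_P: "(a, b) \<in> Pset K D \<Longrightarrow> Mx K D f a b = f (a, b)"
  unfolding Mx_def Pset_def by (auto simp: min_def max_def)

lemma Pphi_bound:
  assumes "f \<in> PF K D Q" "i < N" "b < D"
  shows "Pphi K D i f b \<le> Q * D * N ^ D"
proof -
  have "Mx K D f a b * i ^ a \<le> Q * N ^ D" if "a < D" for a
  proof -
    have "i ^ a \<le> N ^ a" using assms(2) by (intro power_mono) auto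
    also have "\<dots> \<le> N ^ D" using assms(2) that by (intro power_increasing) auto
    finally show ?thesis using Mx_le[OF assms(1)] by (intro mult_mono) auto
  qed
  hence "(\<Sum>a<D. Mx K D f a b * i ^ a) \<le> card {..<D} * (Q * N ^ D)"
    using sum_bounded_above[of "{..<D}" "\<lambda>a. Mx K D f a b * i ^ a" "Q * N ^ D"] by simp
  thus ?thesis using assms(3) by (simp add: Pphi_def mult_ac)
qed

lemma Pmu_Pphi: "Pmu D i j (Pphi K D j f) = (\<Sum>a<D. Pphi K D i f a * j ^ a)"
proof -
  have "Pmu D i j (Pphi K D j f) = (\<Sum>b<D. \<Sum>a<D. Mx K D f a b * j ^ a * i ^ b)"
    unfolding Pmu_def Pphi_def by (simp add: sum_distrib_right)
  also have "\<dots> = (\<Sum>a<D. \<Sum>b<D. Mx K D f a b * j ^ a * i ^ b)" by (rule sum.swap)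
  also have "\<dots> = (\<Sum>a<D. (\<Sum>b<D. Mx K D f b a * i ^ b) * j ^ a)"
  proof (intro sum.cong refl)
    fix a show "(\<Sum>b<D. Mx K D f a b * j ^ a * i ^ b) = (\<Sum>b<D. Mx K D f b a * i ^ b) * j ^ a"
      by (simp add: sum_distrib_right sum_distrib_left Mx_sym[of K D f a] mult_ac)
  qed
  also have "\<dots> = (\<Sum>a<D. Pphi K D i f a * j ^ a)" unfolding Pphi_def by simp
  finally show ?thesis .
qed

lemma card_Pset: "K \<le> D \<Longrightarrow> card (Pset K D) = (\<Sum>a<K. D - a)"
proof -
  assume "K \<le> D"
  have "Pset K D = Sigma {..<K} (\<lambda>a. {a..<D})" unfolding Pset_def by auto
  thus ?thesis by (simp add: card_SigmaI)
qed


lemma pm_gcode: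
  assumes K: "0 < K" "K \<le> D" "D < N" and Q: "Q \<ge> 1"
  shows "gcode N K D (((real (D * D * N ^ D * N ^ D) + 1) * real Q) ^ D)
                     (((real (D * D * N ^ D * N ^ D) + 1) * real Q) ^ 1)
                     (PF K D Q) (Pphi K D) (Pmu D)
         \<and> card (PF K D Q) = Q ^ (\<Sum>a<K. D - a)"
proof -
  define c1 where "c1 = real (D * D * N ^ D * N ^ D) + 1"
  define R1 where "R1 = Q * D * N ^ D"
  define R2 where "R2 = Q * (D * D * N ^ D * N ^ D)"
  have R1c: "real R1 + 1 \<le> c1 * real Q"
  proof -
    have "D * N ^ D \<le> D * D * N ^ D * N ^ D"
    proof -
      have "1 \<le> D * N ^ D" using K by simp
      hence "D * N ^ D * 1 \<le> D * N ^ D * (D * N ^ D)" by (intro mult_left_mono) auto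
      thus ?thesis by (simp add: mult_ac)
    qed
    hence "real (Q * D * N ^ D) \<le> real Q * real (D * D * N ^ D * N ^ D)"
      by (metis mult.assoc mult.commute mult_le_mono2 of_nat_le_iff of_nat_mult)
    thus ?thesis using Q unfolding R1_def c1_def by (simp add: algebra_simps)
  qed
  have R2c: "real R2 + 1 \<le> c1 * real Q"
  proof -
    define X where "X = real (D * D * N ^ D * N ^ D)"
    have e: "real R2 = real Q * X" unfolding R2_def X_def by (simp only: of_nat_mult)
    have "real Q * X + 1 \<le> (X + 1) * real Q" using Q by (simp add: algebra_simps)
    thus ?thesis unfolding e c1_def X_def[symmetric] .
  qed
  have finP: "finite (Pset K D)"
    by (rule finite_subset[of _ "{..<K} \<times> {..<D}"]) (auto simp: Pset_def)
  have finF: "finite (PF K D Q)" unfolding PF_def using finP by (intro finite_PiE) auto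
  have neF: "PF K D Q \<noteq> {}" unfolding PF_def using Q by (simp add: PiE_eq_empty_iff lessThan_empty_iff)
  have nodes: "real (card (Pphi K D i ` PF K D Q)) \<le> (c1 * real Q) ^ D" if i: "i < N" for i
  proof -
    have "Pphi K D i ` PF K D Q \<subseteq> PiE {..<D} (\<lambda>_. {..R1})"
    proof (rule image_subsetI)
      fix f assume f: "f \<in> PF K D Q"
      have "Pphi K D i f = restrict (Pphi K D i f) {..<D}" unfolding Pphi_def by simp
      also have "\<dots> \<in> PiE {..<D} (\<lambda>_. {..R1})"
        using Pphi_bound[OF f i] unfolding R1_def by (intro restrict_in_PiE_atMost) auto
      finally show "Pphi K D i f \<in> PiE {..<D} (\<lambda>_. {..R1})" .
    qed
    hence "real (card (Pphi K D i ` PF K D Q)) \<le> (real R1 + 1) ^ D"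
      by (intro card_PiE_bound) auto
    also have "\<dots> \<le> (c1 * real Q) ^ D" using R1c by (intro power_mono) auto
    finally show ?thesis .
  qed
  have recon: "\<forall>f1\<in>PF K D Q. \<forall>f2\<in>PF K D Q. (\<forall>i\<in>K'. Pphi K D i f1 = Pphi K D i f2) \<longrightarrow> f1 = f2"
    if KK: "K' \<subseteq> {..<N} \<and> card K' = K" for K'
  proof (intro ballI impI)
    fix f1 f2 assume f: "f1 \<in> PF K D Q" "f2 \<in> PF K D Q" and eq: "\<forall>i\<in>K'. Pphi K D i f1 = Pphi K D i f2"
    have finK: "finite K'" using KK finite_subset by blast
    have col: "(\<Sum>a<D. Mx K D f1 a b * x ^ a) = (\<Sum>a<D. Mx K D f2 a b * x ^ a)" if "b < D" "x \<in> K'" for b x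
      using fun_cong[OF bspec[OF eq that(2)], of b] that(1) by (simp add: Pphi_def)
    have split: "(\<Sum>a<D. g a) = (\<Sum>a<K. g a) + (\<Sum>a\<in>{K..<D}. g a)" for g :: "nat \<Rightarrow> nat"
    proof -
      have "{..<D} = {..<K} \<union> {K..<D}" using K by auto
      thus ?thesis by (simp add: sum.union_disjoint[of "{..<K}" "{K..<D}"] ivl_disj_int)
    qed
    have step1: "Mx K D f1 a b = Mx K D f2 a b" if "K \<le> b" "b < D" "a < D" for a b
    proof (cases "a < K")
      case True
      have "\<forall>a<K. Mx K D f1 a b = Mx K D f2 a b"
      proof (rule poly_unique_nat[OF finK])
        show "K \<le> card K'" using KK by simp
        show "\<forall>x\<in>K'. (\<Sum>a<K. Mx K D f1 a b * x ^ a) = (\<Sum>a<K. Mx K D f2 a b * x ^ a)"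
        proof
          fix x assume x: "x \<in> K'"
          have z: "(\<Sum>a\<in>{K..<D}. Mx K D g a b * x ^ a) = 0" for g
            using that(1) by (simp add: Mx_zero)
          show "(\<Sum>a<K. Mx K D f1 a b * x ^ a) = (\<Sum>a<K. Mx K D f2 a b * x ^ a)"
            using col[OF that(2) x] split[of "\<lambda>a. Mx K D f1 a b * x ^ a"] split[of "\<lambda>a. Mx K D f2 a b * x ^ a"] z
            by simp
        qed
      qed
      thus ?thesis using True by simp
    next
      case False thus ?thesis using that by (simp add: Mx_zero)
    qed
    have step2: "Mx K D f1 a b = Mx K D f2 a b" if "b < K" "a < K" for a b
    proof -
      have bD: "b < D" using that K by simp
      have "\<forall>a<K. Mx K D f1 a b = Mx K D f2 a b"
      proof (rule poly_unique_nat[OF finK])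
        show "K \<le> card K'" using KK by simp
        show "\<forall>x\<in>K'. (\<Sum>a<K. Mx K D f1 a b * x ^ a) = (\<Sum>a<K. Mx K D f2 a b * x ^ a)"
        proof
          fix x assume x: "x \<in> K'"
          have z: "(\<Sum>a\<in>{K..<D}. Mx K D f1 a b * x ^ a) = (\<Sum>a\<in>{K..<D}. Mx K D f2 a b * x ^ a)"
          proof (intro sum.cong refl)
            fix a assume "a \<in> {K..<D}"
            hence "Mx K D f1 b a = Mx K D f2 b a" using step1[of a b] bD by simp
            thus "Mx K D f1 a b * x ^ a = Mx K D f2 a b * x ^ a" by (simp add: Mx_sym[of K D _ a b])
          qed
          show "(\<Sum>a<K. Mx K D f1 a b * x ^ a) = (\<Sum>a<K. Mx K D f2 a b * x ^ a)"
            using col[OF bD x] split[of "\<lambda>a. Mx K D f1 a b * x ^ a"] split[of "\<lambda>a. Mx K D f2 a b * x ^ a"] z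
            by simp
        qed
      qed
      thus ?thesis using that by simp
    qed
    show "f1 = f2"
    proof (rule PiE_ext)
      show "f1 \<in> PiE (Pset K D) (\<lambda>_. {..<Q})" "f2 \<in> PiE (Pset K D) (\<lambda>_. {..<Q})" using f unfolding PF_def by auto
      fix p assume p: "p \<in> Pset K D"
      then obtain a b where ab: "p = (a, b)" "a < K" "a \<le> b" "b < D" unfolding Pset_def by auto
      have "Mx K D f1 a b = Mx K D f2 a b"
      proof (cases "b < K")
        case True thus ?thesis using step2 ab by simp
      next
        case False thus ?thesis using step1 ab K by simp
      qed
      thus "f1 p = f2 p" using p ab by (simp add: Mx_P)
    qed
  qed
  have repair: "(\<forall>j\<in>H. real (card (Pmu D i j ` Pphi K D j ` PF K D Q)) \<le> (c1 * real Q) ^ 1) \<and>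
      (\<forall>f1\<in>PF K D Q. \<forall>f2\<in>PF K D Q. (\<forall>j\<in>H. Pmu D i j (Pphi K D j f1) = Pmu D i j (Pphi K D j f2)) \<longrightarrow> Pphi K D i f1 = Pphi K D i f2)"
    if i: "i < N" and HH: "H \<subseteq> {..<N} - {i} \<and> card H = D" for i H
  proof (intro conjI ballI impI)
    fix j assume j: "j \<in> H"
    have jN: "j < N" using j HH by auto
    have "Pmu D i j ` Pphi K D j ` PF K D Q \<subseteq> {..R2}"
    proof (rule image_subsetI)
      fix v assume "v \<in> Pphi K D j ` PF K D Q"
      then obtain f where f: "f \<in> PF K D Q" "v = Pphi K D j f" by blast
      have "v b * i ^ b \<le> R1 * N ^ D" if "b < D" for b
      proof -
        have "i ^ b \<le> N ^ b" using i by (intro power_mono) auto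
        also have "\<dots> \<le> N ^ D" using i that by (intro power_increasing) auto
        finally show ?thesis using Pphi_bound[OF f(1) jN that] f(2) unfolding R1_def by (intro mult_mono) auto
      qed
      hence "Pmu D i j v \<le> card {..<D} * (R1 * N ^ D)" unfolding Pmu_def
        using sum_bounded_above[of "{..<D}" "\<lambda>b. v b * i ^ b" "R1 * N ^ D"] by simp
      thus "Pmu D i j v \<in> {..R2}" unfolding R1_def R2_def by (simp add: mult_ac)
    qed
    hence "card (Pmu D i j ` Pphi K D j ` PF K D Q) \<le> card {..R2}" by (intro card_mono) auto
    hence "real (card (Pmu D i j ` Pphi K D j ` PF K D Q)) \<le> real R2 + 1" by simp
    thus "real (card (Pmu D i j ` Pphi K D j ` PF K D Q)) \<le> (c1 * real Q) ^ 1" using R2c by simp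
  next
    fix f1 f2 assume f: "f1 \<in> PF K D Q" "f2 \<in> PF K D Q"
      and eq: "\<forall>j\<in>H. Pmu D i j (Pphi K D j f1) = Pmu D i j (Pphi K D j f2)"
    have "\<forall>a<D. Pphi K D i f1 a = Pphi K D i f2 a"
    proof (rule poly_unique_nat)
      show "finite H" using HH finite_subset by blast
      show "D \<le> card H" using HH by simp
      show "\<forall>x\<in>H. (\<Sum>a<D. Pphi K D i f1 a * x ^ a) = (\<Sum>a<D. Pphi K D i f2 a * x ^ a)"
        using eq by (simp add: Pmu_Pphi)
    qed
    thus "Pphi K D i f1 = Pphi K D i f2" unfolding Pphi_def
      by (intro restrict_ext) (simp add: Pphi_def)
  qed
  have cardF: "card (PF K D Q) = Q ^ (\<Sum>a<K. D - a)"
  proof -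
    have "card (PF K D Q) = Q ^ card (Pset K D)" unfolding PF_def using finF
      by (simp add: card_PiE PF_def finP)
    thus ?thesis using card_Pset K by simp
  qed
  have "gcode N K D ((c1 * real Q) ^ D) ((c1 * real Q) ^ 1) (PF K D Q) (Pphi K D) (Pmu D)"
    unfolding gcode_def
    apply (intro conjI finF neF)
    subgoal using nodes by blast
    subgoal using recon by blast
    subgoal using repair by blast
    done
  thus ?thesis using cardF unfolding c1_def by blast
qed


lemma pm_bound:
  assumes K: "0 < K" "K \<le> D" "D < N" and pos: "\<alpha> > 0"
  shows "C_func K D \<alpha> \<alpha> \<le> C_exact N K D \<alpha> \<alpha>"
proof -
  define Lf where "Lf = (\<Sum>a<K. D - a)"
  have Dpos: "D > 0" using K by simp
  have c1: "real (D * D * N ^ D * N ^ D) + 1 \<ge> 1" by simp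
  have ach: "real Lf * min (\<alpha> / real D) (\<alpha> / (real D * real (1::nat))) \<le> C_exact N K D \<alpha> \<alpha>"
  proof (rule achieve[OF K pos pos Dpos _ c1, where FF = "\<lambda>Q. PF K D Q" and phh = "\<lambda>Q. Pphi K D" and muu = "\<lambda>Q. Pmu D"])
    show "(0::nat) < 1" by simp
    fix Q :: nat assume "Q \<ge> 2"
    thus "gcode N K D (((real (D * D * N ^ D * N ^ D) + 1) * real Q) ^ D) (((real (D * D * N ^ D * N ^ D) + 1) * real Q) ^ 1)
           (PF K D Q) (Pphi K D) (Pmu D) \<and> card (PF K D Q) = Q ^ Lf"
      unfolding Lf_def using pm_gcode[OF K, of Q] by auto
  qed
  have "C_func K D \<alpha> \<alpha> = (\<Sum>j<K. (real D - real j) / real D * \<alpha>)"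
    unfolding C_func_def
  proof (intro sum.cong refl)
    fix j assume "j \<in> {..<K}"
    have "(real D - real j) / real D \<le> 1" using Dpos by (simp add: divide_le_eq)
    hence "(real D - real j) / real D * \<alpha> \<le> 1 * \<alpha>" using pos by (intro mult_right_mono) auto
    thus "min \<alpha> ((real D - real j) / real D * \<alpha>) = (real D - real j) / real D * \<alpha>" by simp
  qed
  also have "\<dots> = real Lf * \<alpha> / real D"
  proof -
    have "real Lf = (\<Sum>j<K. real D - real j)" unfolding Lf_def using K
      by (simp add: of_nat_diff)
    hence "real Lf * \<alpha> / real D = (\<Sum>j<K. (real D - real j) * \<alpha> / real D)"
      by (simp add: sum_divide_distrib sum_distrib_right)
    thus ?thesis by simp
  qed
  also have "\<dots> = real Lf * min (\<alpha> / real D) (\<alpha> / (real D * real (1::nat)))" by simp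
  finally show ?thesis using ach by simp
qed


lemma C_func_pos:
  assumes "0 < K" "K \<le> D" "\<alpha> > 0" "\<gamma> > 0"
  shows "C_func K D \<alpha> \<gamma> > 0"
proof -
  have nn: "0 \<le> min \<alpha> ((real D - real j) / real D * \<gamma>)" if "j \<in> {..<K}" for j
    using that assms by auto
  have "0 < min \<alpha> ((real D - real 0) / real D * \<gamma>)" using assms by auto
  also have "\<dots> \<le> C_func K D \<alpha> \<gamma>" unfolding C_func_def
    using member_le_sum[of 0 "{..<K}" "\<lambda>j. min \<alpha> ((real D - real j) / real D * \<gamma>)"] nn assms(1) by auto
  finally show ?thesis .
qed

lemma C_func_le: "C_func K D \<alpha> \<gamma> \<le> real K * \<alpha>"
proof -
  have "C_func K D \<alpha> \<gamma> \<le> (\<Sum>j<K. \<alpha>)" unfolding C_func_def by (intro sum_mono) auto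
  thus ?thesis by simp
qed

lemma ratio_bounds_pos:
  assumes K: "0 < K" "K \<le> D" "D < N" and pos: "\<alpha> > 0" "0 < s" "s \<le> 1"
    and r: "r = real D - real K + 1"
    and g: "\<gamma> = s * (real D * \<alpha> / r) + (1 - s) * \<alpha>"
    and M: "real M * s > real (N - K) * r" "real M \<le> real N - 1"
  shows "1 - real (N - K) * r / (s * real M) \<le> C_exact N K D \<alpha> \<gamma> / C_func K D \<alpha> \<gamma>
         \<and> C_exact N K D \<alpha> \<gamma> / C_func K D \<alpha> \<gamma> \<le> 1"
proof -
  define c where "c = N - K"
  have c1: "c \<ge> 1" "real c = real N - real K" using K by (auto simp: c_def)
  have r1: "r \<ge> 1" using K r by simp
  have "real (N - K) * r > 0" using c1 r1 unfolding c_def by simp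
  hence Mpos: "real M > 0"
  proof -
    assume h: "real (N - K) * r > 0"
    show ?thesis
    proof (rule ccontr)
      assume "\<not> real M > 0"
      hence "real M = 0" by simp
      hence "real (N - K) * r < 0" using M(1) by (simp only: mult_zero_left)
      thus False using h by linarith
    qed
  qed
  define x where "x = s * (real N - 1) / r"
  have x0: "x \<ge> 0" using pos r1 K unfolding x_def by simp
  define w where "w = nat \<lfloor>x\<rfloor> + 1"
  have wx: "real w > x" "real w - 1 \<le> x" unfolding w_def using x0 by linarith+
  have xM: "x \<ge> s * real M / r" unfolding x_def using M(2) pos r1 by (intro divide_right_mono mult_left_mono) auto
  have xc: "s * real M / r > real c" using M(1) r1 pos by (simp add: c_def field_simps mult.commute)
  have wc: "real w > real c" using wx xM xc by linarith
  hence wc': "N - K < w" unfolding c_def by simp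
  have "x \<le> real N - 1"
  proof -
    have "s * (real N - 1) \<le> 1 * (real N - 1)" using pos K by (intro mult_right_mono) auto
    also have "\<dots> \<le> r * (real N - 1)" using r1 K by (intro mult_right_mono) auto
    finally show ?thesis unfolding x_def using r1 by (simp add: divide_le_eq mult.commute)
  qed
  hence wN: "w \<le> N" using wx by linarith
  have w2: "real w - 1 > 0" using wc c1 by linarith
  have g1: "real D * \<alpha> / r > 0" using K pos r1 by simp
  have g2: "s * (real D * \<alpha> / r) > 0" using g1 pos by (intro mult_pos_pos)
  have g3: "(1 - s) * \<alpha> \<ge> 0" using pos by simp
  have gpos: "\<gamma> > 0" using g g2 g3 by linarith
  have gge: "\<gamma> \<ge> s * (real D * \<alpha> / r)" using g pos by simp
  have Dpos: "real D > 0" using K by simp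
  have minA: "min \<alpha> (\<gamma> * (real N - 1) / (real D * (real w - 1))) = \<alpha>"
  proof -
    have "real D * \<alpha> * (real w - 1) \<le> real D * \<alpha> * x" using wx Dpos pos by (intro mult_left_mono) auto
    also have "\<dots> = s * (real D * \<alpha> / r) * (real N - 1)" unfolding x_def using r1 by (simp add: field_simps)
    also have "\<dots> \<le> \<gamma> * (real N - 1)" using gge K by (intro mult_right_mono) auto
    finally have "\<alpha> * (real D * (real w - 1)) \<le> \<gamma> * (real N - 1)" by (simp add: mult_ac)
    hence "\<alpha> \<le> \<gamma> * (real N - 1) / (real D * (real w - 1))" using Dpos w2 by (simp add: le_divide_eq)
    thus ?thesis by simp
  qed
  have low: "real (w - c) * real N / real w * \<alpha> \<le> C_exact N K D \<alpha> \<gamma>"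
    using layered_bound[OF K wc' wN pos(1) gpos] minA unfolding c_def by simp
  have Cf: "C_func K D \<alpha> \<gamma> > 0" by (rule C_func_pos) (use K pos gpos in auto)
  have "real K * \<alpha> \<le> real N * \<alpha>" using K pos by (intro mult_right_mono) auto
  hence CfN: "C_func K D \<alpha> \<gamma> \<le> real N * \<alpha>" using C_func_le[of K D \<alpha> \<gamma>] by linarith
  have wpos: "real w > 0" using w2 by simp
  have lowpos: "0 \<le> real (w - c) * real N / real w * \<alpha>" using pos by simp
  have "1 - real c / real w = real (w - c) * real N / real w * \<alpha> / (real N * \<alpha>)"
    using wc wpos pos K by (simp add: of_nat_diff field_simps)
  also have "\<dots> \<le> real (w - c) * real N / real w * \<alpha> / C_func K D \<alpha> \<gamma>"
    using Cf CfN lowpos by (intro divide_left_mono) auto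
  also have "\<dots> \<le> C_exact N K D \<alpha> \<gamma> / C_func K D \<alpha> \<gamma>" using low Cf by (intro divide_right_mono) auto
  finally have A: "1 - real c / real w \<le> C_exact N K D \<alpha> \<gamma> / C_func K D \<alpha> \<gamma>" .
  have "real c / real w \<le> real c / (s * real M / r)"
  proof (rule divide_left_mono)
    have smr: "s * real M / r > 0" using xc c1 by linarith
    show "s * real M / r \<le> real w" using wx xM by linarith
    show "0 \<le> real c" by simp
    show "0 < real w * (s * real M / r)" using smr wx xM by (intro mult_pos_pos) auto
  qed
  also have "\<dots> = real c * r / (s * real M)" using r1 by simp
  finally have B: "1 - real c * r / (s * real M) \<le> 1 - real c / real w" by simp
  have U: "C_exact N K D \<alpha> \<gamma> / C_func K D \<alpha> \<gamma> \<le> 1"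
    using Cexact_le[OF K] pos gpos Cf by (simp add: divide_le_eq)
  show ?thesis using A B U unfolding c_def by simp
qed


theorem theorem5p2:
  fixes n k d :: nat and \<alpha> s :: real
  assumes "0 < k" "k \<le> d" "d < n" "0 < \<alpha>" "0 \<le> s" "s \<le> 1"
  shows "(\<lambda>M. let \<gamma>MSR = real (d + M) * \<alpha> / (real (d + M) - real (k + M) + 1);
                 \<gamma>MBR = \<alpha>;
                 \<gamma> = s * \<gamma>MSR + (1 - s) * \<gamma>MBR
             in C_exact (n + M) (k + M) (d + M) \<alpha> \<gamma> / C_func (k + M) (d + M) \<alpha> \<gamma>)
         \<longlonglongrightarrow> 1"
proof -
  define r where "r = real d - real k + 1"
  have rr: "real (d + M) - real (k + M) + 1 = r" for M by (simp add: r_def)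
  define g where "g M = s * (real (d + M) * \<alpha> / r) + (1 - s) * \<alpha>" for M
  define ratio where "ratio M = C_exact (n + M) (k + M) (d + M) \<alpha> (g M) / C_func (k + M) (d + M) \<alpha> (g M)" for M
  have eqf: "(\<lambda>M. let \<gamma>MSR = real (d + M) * \<alpha> / (real (d + M) - real (k + M) + 1);
                 \<gamma>MBR = \<alpha>;
                 \<gamma> = s * \<gamma>MSR + (1 - s) * \<gamma>MBR
             in C_exact (n + M) (k + M) (d + M) \<alpha> \<gamma> / C_func (k + M) (d + M) \<alpha> \<gamma>) = ratio"
    by (rule ext) (simp only: Let_def rr ratio_def g_def)
  have KM: "0 < k + M" "k + M \<le> d + M" "d + M < n + M" for M using assms by auto
  show ?thesis unfolding eqf
  proof (cases "s = 0")
    case True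
    have "ratio M = 1" for M
    proof -
      have gM: "g M = \<alpha>" using True by (simp add: g_def)
      have "C_exact (n + M) (k + M) (d + M) \<alpha> \<alpha> = C_func (k + M) (d + M) \<alpha> \<alpha>"
        using pm_bound[OF KM assms(4), of M] Cexact_le[OF KM, of \<alpha> \<alpha> M] assms(4) by simp
      moreover have "C_func (k + M) (d + M) \<alpha> \<alpha> > 0" using KM assms(4) by (intro C_func_pos) auto
      ultimately show ?thesis unfolding ratio_def gM by simp
    qed
    hence "ratio = (\<lambda>M. 1)" by auto
    thus "ratio \<longlonglongrightarrow> 1" by simp
  next
    case False
    hence spos: "s > 0" using assms(5) by simp
    define C where "C = real (n - k) * r"
    define lo where "lo M = 1 - C / (s * real M)" for M
    have lo_lim: "lo \<longlonglongrightarrow> 1"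
    proof -
      have "(\<lambda>M. inverse (real M) * (C / s)) \<longlonglongrightarrow> 0"
        by (rule tendsto_mult_left_zero[OF lim_inverse_n])
      hence "(\<lambda>M. 1 - inverse (real M) * (C / s)) \<longlonglongrightarrow> 1 - 0" by (intro tendsto_diff tendsto_const)
      moreover have "lo = (\<lambda>M. 1 - inverse (real M) * (C / s))"
        by (rule ext) (simp add: lo_def divide_inverse mult_ac)
      ultimately show ?thesis by simp
    qed
    define M0 where "M0 = nat \<lceil>C / s\<rceil> + 1"
    have ev: "eventually (\<lambda>M. lo M \<le> ratio M \<and> ratio M \<le> 1) sequentially"
    proof (rule eventually_sequentiallyI[of M0])
      fix M assume M: "M \<ge> M0"
      have "real M > C / s" using M unfolding M0_def by linarith
      hence M1: "real M * s > real (n + M - (k + M)) * r" using spos by (simp add: C_def field_simps)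
      have M2: "real M \<le> real (n + M) - 1" using assms by simp
      have "1 - real (n + M - (k + M)) * r / (s * real M) \<le> ratio M \<and> ratio M \<le> 1"
        unfolding ratio_def
        by (rule ratio_bounds_pos[OF KM assms(4) spos assms(6) rr[symmetric] g_def M1 M2])
      thus "lo M \<le> ratio M \<and> ratio M \<le> 1" by (simp add: lo_def C_def)
    qed
    show "ratio \<longlonglongrightarrow> 1"
      by (rule tendsto_sandwich[OF _ _ lo_lim tendsto_const]) (use ev in \<open>auto elim: eventually_mono\<close>)
  qed
qed

end
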